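(* Let $S,T$ be left inverse semi-braces, $\sigma,\delta,\mathfrak b$ as follows: $\sigma:T\to\mathrm{Aut}(S)$ a homomorphism from $(T,\cdot)$ into the automorphism group of the left inverse semi-brace $S$ (${}^ua=\sigma(u)(a)$), $\delta:S\to\mathrm{End}(T,+)$ a map ($u^a=\delta(a)(u)$), and $\mathfrak b$ a $\delta$-cocycle satisfying $\mathfrak b(a\,{}^ub,\lambda_a({}^uc))+(uv)^{\lambda_a({}^uc)}+u(\mathfrak b({}^{u^{-1}}(a^{-1}),c)+(u^{-1})^c)=u(\mathfrak b(b,c)+v^c)$ for all $a,b,c\in S$, $u,v\in T$. Let $B$ be the asymmetric product, i.e. $S\times T$ with $(a,u)+(b,v)=(a+b,\mathfrak b(a,b)+u^b+v)$, $(a,u)(b,v)=(a\,{}^ub,uv)$. Then, writing $\Omega^b_{u,v}=(u^{-1})^b+v$ and $Y=\mathfrak b({}^{u^{-1}}a^{-1},b)+\Omega^b_{u,v}$, the map $r_B$ associated to $B$ is given by $$r_B((a,u),(b,v))=\left(\left(\lambda_a({}^ub),\,u\,Y\right),\ \left({}^{Y^{-1}u^{-1}}\rho_{{}^ub}(a),\ Y^{-1}v\right)\right)$$ for all $(a,u),(b,v)\in S\times T$.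
   Context: An inverse semigroup is a semigroup $(S,\cdot)$ in which for each $a$ there is a unique $a^{-1}$ with $aa^{-1}a=a$, $a^{-1}aa^{-1}=a^{-1}$. A left inverse semi-brace is a triple $(S,+,\cdot)$ with $(S,+)$ a semigroup, $(S,\cdot)$ an inverse semigroup and $a(b+c)=ab+a(a^{-1}+c)$ for all $a,b,c$. Set $\lambda_a(b)=a(a^{-1}+b)$, $\rho_b(a)=(a^{-1}+b)^{-1}b$; the map associated to $X$ is $r_X(x,y)=(\lambda_x(y),\rho_y(x))$. An automorphism of the left inverse semi-brace $S$ is a bijection preserving both operations. A $\delta$-cocycle is a map $\mathfrak b:S\times S\to T$ with $\mathfrak b(a+b,c)+\mathfrak b(a,b)^c+(u^b)^c+v^c=\mathfrak b(a,b+c)+u^{b+c}+\mathfrak b(b,c)+v^c$ for all $a,b,c\in S$, $u,v\in T$. Under these hypotheses $B$ is a left inverse semi-brace. *)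

theory Defs
  imports Main
begin

definition inverse_semigroup :: "('a \<Rightarrow> 'a \<Rightarrow> 'a) \<Rightarrow> bool" where
  "inverse_semigroup mult \<longleftrightarrow>
     (\<forall>a b c. mult (mult a b) c = mult a (mult b c)) \<and>
     (\<forall>a. \<exists>!x. mult (mult a x) a = a \<and> mult (mult x a) x = x)"

definition inv_of :: "('a \<Rightarrow> 'a \<Rightarrow> 'a) \<Rightarrow> 'a \<Rightarrow> 'a" where
  "inv_of mult a = (THE x. mult (mult a x) a = a \<and> mult (mult x a) x = x)"

definition left_inverse_semi_brace :: "('a \<Rightarrow> 'a \<Rightarrow> 'a) \<Rightarrow> ('a \<Rightarrow> 'a \<Rightarrow> 'a) \<Rightarrow> bool" where
  "left_inverse_semi_brace add mult \<longleftrightarrow>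
     (\<forall>a b c. add (add a b) c = add a (add b c)) \<and>
     inverse_semigroup mult \<and>
     (\<forall>a b c. mult a (add b c) = add (mult a b) (mult a (add (inv_of mult a) c)))"

definition lam :: "('a \<Rightarrow> 'a \<Rightarrow> 'a) \<Rightarrow> ('a \<Rightarrow> 'a \<Rightarrow> 'a) \<Rightarrow> 'a \<Rightarrow> 'a \<Rightarrow> 'a" where
  "lam add mult a b = mult a (add (inv_of mult a) b)"

definition rho :: "('a \<Rightarrow> 'a \<Rightarrow> 'a) \<Rightarrow> ('a \<Rightarrow> 'a \<Rightarrow> 'a) \<Rightarrow> 'a \<Rightarrow> 'a \<Rightarrow> 'a" where
  "rho add mult b a = mult (inv_of mult (add (inv_of mult a) b)) b"

definition r_map :: "('a \<Rightarrow> 'a \<Rightarrow> 'a) \<Rightarrow> ('a \<Rightarrow> 'a \<Rightarrow> 'a) \<Rightarrow> 'a \<Rightarrow> 'a \<Rightarrow> 'a \<times> 'a" where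
  "r_map add mult x y = (lam add mult x y, rho add mult y x)"

definition lisb_automorphism :: "('a \<Rightarrow> 'a \<Rightarrow> 'a) \<Rightarrow> ('a \<Rightarrow> 'a \<Rightarrow> 'a) \<Rightarrow> ('a \<Rightarrow> 'a) \<Rightarrow> bool" where
  "lisb_automorphism add mult f \<longleftrightarrow> bij f \<and>
     (\<forall>a b. f (add a b) = add (f a) (f b)) \<and> (\<forall>a b. f (mult a b) = mult (f a) (f b))"

definition delta_cocycle ::
  "('a \<Rightarrow> 'a \<Rightarrow> 'a) \<Rightarrow> ('b \<Rightarrow> 'b \<Rightarrow> 'b) \<Rightarrow> ('a \<Rightarrow> 'b \<Rightarrow> 'b) \<Rightarrow> ('a \<Rightarrow> 'a \<Rightarrow> 'b) \<Rightarrow> bool" where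
  "delta_cocycle addS addT \<delta> bb \<longleftrightarrow>
     (\<forall>a b c u v.
        addT (addT (addT (bb (addS a b) c) (\<delta> c (bb a b))) (\<delta> c (\<delta> b u))) (\<delta> c v)
      = addT (addT (addT (bb a (addS b c)) (\<delta> (addS b c) u)) (bb b c)) (\<delta> c v))"

definition asym_add ::
  "('a \<Rightarrow> 'a \<Rightarrow> 'a) \<Rightarrow> ('b \<Rightarrow> 'b \<Rightarrow> 'b) \<Rightarrow> ('a \<Rightarrow> 'b \<Rightarrow> 'b) \<Rightarrow> ('a \<Rightarrow> 'a \<Rightarrow> 'b)
   \<Rightarrow> 'a \<times> 'b \<Rightarrow> 'a \<times> 'b \<Rightarrow> 'a \<times> 'b" where
  "asym_add addS addT \<delta> bb x y =
     (addS (fst x) (fst y), addT (addT (bb (fst x) (fst y)) (\<delta> (fst y) (snd x))) (snd y))"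

definition asym_mult ::
  "('a \<Rightarrow> 'a \<Rightarrow> 'a) \<Rightarrow> ('b \<Rightarrow> 'b \<Rightarrow> 'b) \<Rightarrow> ('b \<Rightarrow> 'a \<Rightarrow> 'a)
   \<Rightarrow> 'a \<times> 'b \<Rightarrow> 'a \<times> 'b \<Rightarrow> 'a \<times> 'b" where
  "asym_mult multS multT \<sigma> x y = (multS (fst x) (\<sigma> (snd x) (fst y)), multT (snd x) (snd y))"

end

theory Submission
  imports Defs
begin

lemma inv_props:
  assumes "inverse_semigroup m"
  shows "m (m a (inv_of m a)) a = a \<and> m (m (inv_of m a) a) (inv_of m a) = inv_of m a"
proof -
  have "\<exists>!x. m (m a x) a = a \<and> m (m x a) x = x" using assms unfolding inverse_semigroup_def by blast
  from theI'[OF this] show ?thesis unfolding inv_of_def .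
qed

lemma inv_unique:
  assumes "inverse_semigroup m" "m (m a x) a = a" "m (m x a) x = x"
  shows "inv_of m a = x"
proof -
  have "\<exists>!x. m (m a x) a = a \<and> m (m x a) x = x" using assms unfolding inverse_semigroup_def by blast
  from the1_equality[OF this] assms(2,3) show ?thesis unfolding inv_of_def by blast
qed

lemma assoc: "inverse_semigroup m \<Longrightarrow> m (m a b) c = m a (m b c)"
  unfolding inverse_semigroup_def by blast

lemma idem_id:
  assumes "m e e = e" and hom: "\<And>u v. \<sigma> (m u v) = \<sigma> u \<circ> \<sigma> v" and b: "bij (\<sigma> e)"
  shows "\<sigma> e x = x"
proof -
  have "\<sigma> e (\<sigma> e x) = \<sigma> e x" using hom[of e e] assms(1) by (metis comp_apply)
  thus ?thesis using b by (meson bij_is_inj injD)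
qed

lemma aut_inv:
  assumes "inverse_semigroup m" "\<And>a b. f (m a b) = m (f a) (f b)"
  shows "f (inv_of m a) = inv_of m (f a)"
proof -
  have "m (m a (inv_of m a)) a = a" "m (m (inv_of m a) a) (inv_of m a) = inv_of m a"
    using inv_props[OF assms(1)] by auto
  hence "f (m (m a (inv_of m a)) a) = f a" "f (m (m (inv_of m a) a) (inv_of m a)) = f (inv_of m a)"
    by auto
  hence "m (m (f a) (f (inv_of m a))) (f a) = f a" "m (m (f (inv_of m a)) (f a)) (f (inv_of m a)) = f (inv_of m a)"
    by (simp_all add: assms(2))
  thus ?thesis using inv_unique[OF assms(1)] by metis
qed

theorem proposition54:
  fixes addS multS :: "'a \<Rightarrow> 'a \<Rightarrow> 'a"
    and addT multT :: "'b \<Rightarrow> 'b \<Rightarrow> 'b"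
    and \<sigma> :: "'b \<Rightarrow> 'a \<Rightarrow> 'a"
    and \<delta> :: "'a \<Rightarrow> 'b \<Rightarrow> 'b"
    and bb :: "'a \<Rightarrow> 'a \<Rightarrow> 'b"
  assumes S: "left_inverse_semi_brace addS multS"
    and T: "left_inverse_semi_brace addT multT"
    and sigma_aut: "\<And>u. lisb_automorphism addS multS (\<sigma> u)"
    and sigma_hom: "\<And>u v. \<sigma> (multT u v) = \<sigma> u \<circ> \<sigma> v"
    and delta_end: "\<And>a u v. \<delta> a (addT u v) = addT (\<delta> a u) (\<delta> a v)"
    and cocycle: "delta_cocycle addS addT \<delta> bb"
    and compat: "\<And>a b c u v.
       addT (addT (bb (multS a (\<sigma> u b)) (lam addS multS a (\<sigma> u c)))
                  (\<delta> (lam addS multS a (\<sigma> u c)) (multT u v)))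
            (multT u (addT (bb (\<sigma> (inv_of multT u) (inv_of multS a)) c) (\<delta> c (inv_of multT u))))
       = multT u (addT (bb b c) (\<delta> c v))"
  shows "\<And>a u b v.
    let Y = addT (bb (\<sigma> (inv_of multT u) (inv_of multS a)) b)
                 (addT (\<delta> b (inv_of multT u)) v)
    in r_map (asym_add addS addT \<delta> bb) (asym_mult multS multT \<sigma>) (a, u) (b, v)
       = ((lam addS multS a (\<sigma> u b), multT u Y),
          (\<sigma> (multT (inv_of multT Y) (inv_of multT u)) (rho addS multS (\<sigma> u b) a),
           multT (inv_of multT Y) v))"
proof -
  have iS: "inverse_semigroup multS" and iT: "inverse_semigroup multT"
    and aT: "\<And>x y z. addT (addT x y) z = addT x (addT y z)"
    using S T unfolding left_inverse_semi_brace_def by auto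
  have sadd: "\<And>u x y. \<sigma> u (addS x y) = addS (\<sigma> u x) (\<sigma> u y)"
    and smul: "\<And>u x y. \<sigma> u (multS x y) = multS (\<sigma> u x) (\<sigma> u y)"
    and sbij: "\<And>u. bij (\<sigma> u)"
    using sigma_aut unfolding lisb_automorphism_def by auto
  have scomp: "\<And>u v x. \<sigma> (multT u v) x = \<sigma> u (\<sigma> v x)" using sigma_hom by simp
  have sidem: "\<sigma> e x = x" if "multT e e = e" for e x
    by (rule idem_id[OF that sigma_hom sbij])
  have sinv: "\<sigma> u (inv_of multS x) = inv_of multS (\<sigma> u x)" for u x
    using aut_inv[OF iS, where f="\<sigma> u"] smul by blast
  have idr: "multT (multT u (inv_of multT u)) (multT u (inv_of multT u)) = multT u (inv_of multT u)" for u
  proof -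
    have "multT (multT u (inv_of multT u)) (multT u (inv_of multT u))
       = multT (multT (multT u (inv_of multT u)) u) (inv_of multT u)" by (simp add: assoc[OF iT])
    thus ?thesis using inv_props[OF iT, of u] by simp
  qed
  have idl: "multT (multT (inv_of multT u) u) (multT (inv_of multT u) u) = multT (inv_of multT u) u" for u
  proof -
    have "multT (multT (inv_of multT u) u) (multT (inv_of multT u) u)
       = multT (multT (multT (inv_of multT u) u) (inv_of multT u)) u" by (simp add: assoc[OF iT])
    thus ?thesis using inv_props[OF iT, of u] by simp
  qed
  have c1: "\<And>u x. \<sigma> u (\<sigma> (inv_of multT u) x) = x"
    by (simp flip: scomp add: sidem[OF idr])
  have c2: "\<And>u x. \<sigma> (inv_of multT u) (\<sigma> u x) = x"
    by (simp flip: scomp add: sidem[OF idl])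
  let ?M = "asym_mult multS multT \<sigma>"
  let ?A = "asym_add addS addT \<delta> bb"
  have binv: "inv_of ?M (a, u) = (\<sigma> (inv_of multT u) (inv_of multS a), inv_of multT u)" for a u
  proof -
    note Sa = assoc[OF iS] and Ta = assoc[OF iT]
    define u' where "u' = inv_of multT u"
    define a' where "a' = inv_of multS a"
    have Tu: "multT (multT u u') u = u" "multT (multT u' u) u' = u'"
      using inv_props[OF iT, of u] unfolding u'_def by auto
    have Sa1: "multS (multS a a') a = a" "multS (multS a' a) a' = a'"
      using inv_props[OF iS, of a] unfolding a'_def by auto
    have e1: "\<sigma> (multT u u') z = z" for z using sidem[OF idr] unfolding u'_def .
    have e2: "\<sigma> (multT u' u) z = z" for z using sidem[OF idl] unfolding u'_def .
    have c1': "\<sigma> u (\<sigma> u' z) = z" for z using c1 unfolding u'_def .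
    let ?P = "\<lambda>x. ?M (?M (a, u) x) (a, u) = (a, u) \<and> ?M (?M x (a, u)) x = x"
    have P1: "?P (\<sigma> u' a', u')"
    proof
      show "?M (?M (a, u) (\<sigma> u' a', u')) (a, u) = (a, u)"
        using Sa1 Tu by (simp add: asym_mult_def c1' e1)
      have "\<sigma> u' (multS (multS a' a) a') = \<sigma> u' a'" using Sa1 by simp
      hence "multS (multS (\<sigma> u' a') (\<sigma> u' a)) (\<sigma> u' a') = \<sigma> u' a'" by (simp add: smul)
      thus "?M (?M (\<sigma> u' a', u') (a, u)) (\<sigma> u' a', u') = (\<sigma> u' a', u')"
        using Tu by (simp add: asym_mult_def scomp[symmetric] e2)
    qed
    have P2: "p = (\<sigma> u' a', u')" if "?P p" for p
    proof -
      obtain x y where p: "p = (x, y)" by (cases p)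
      have h1: "multS (multS a (\<sigma> u x)) (\<sigma> (multT u y) a) = a" "multT (multT u y) u = u"
        and h2: "multS (multS x (\<sigma> y a)) (\<sigma> (multT y u) x) = x" "multT (multT y u) y = y"
        using that unfolding p by (simp_all add: asym_mult_def scomp)
      have y: "y = u'" using inv_unique[OF iT h1(2) h2(2)] unfolding u'_def by simp
      have "\<sigma> u (multS (multS x (\<sigma> y a)) (\<sigma> (multT y u) x)) = \<sigma> u x" using h2 by simp
      hence "multS (multS (\<sigma> u x) a) (\<sigma> u x) = \<sigma> u x"
        using y Tu by (simp add: smul scomp[symmetric] e1 Ta)
      moreover have "multS (multS a (\<sigma> u x)) a = a" using h1(1) y by (simp add: e1)
      ultimately have "\<sigma> u x = a'" using inv_unique[OF iS] unfolding a'_def by metis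
      hence "\<sigma> u' (\<sigma> u x) = \<sigma> u' a'" by simp
      hence "x = \<sigma> u' a'" by (simp add: scomp[symmetric] e2)
      thus ?thesis using p y by simp
    qed
    have "inv_of ?M (a, u) = (\<sigma> u' a', u')" unfolding inv_of_def
      by (rule the_equality[where P="?P", OF P1 P2])
    thus ?thesis unfolding u'_def a'_def .
  qed
  fix a u b v
  define u' where "u' = inv_of multT u"
  define a' where "a' = inv_of multS a"
  define X where "X = addS (\<sigma> u' a') b"
  define Y where "Y = addT (bb (\<sigma> u' a') b) (addT (\<delta> b u') v)"
  define Y' where "Y' = inv_of multT Y"
  have c1': "\<sigma> u (\<sigma> u' z) = z" for z using c1 unfolding u'_def .
  have c2': "\<sigma> u' (\<sigma> u z) = z" for z using c2 unfolding u'_def .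
  have sum: "?A (inv_of ?M (a, u)) (b, v) = (X, Y)"
    unfolding binv u'_def[symmetric] a'_def[symmetric] X_def Y_def
    by (simp add: asym_add_def aT)
  have L: "lam ?A ?M (a, u) (b, v) = (lam addS multS a (\<sigma> u b), multT u Y)"
    unfolding lam_def sum by (simp add: asym_mult_def lam_def sadd c1' X_def a'_def)
  have "\<sigma> (multT Y' u') (rho addS multS (\<sigma> u b) a)
      = \<sigma> Y' (\<sigma> u' (multS (inv_of multS (addS a' (\<sigma> u b))) (\<sigma> u b)))"
    unfolding rho_def a'_def by (simp add: scomp)
  also have "\<dots> = \<sigma> Y' (multS (inv_of multS X) b)"
    by (simp add: smul sinv sadd c2' X_def del: sinv[symmetric])
  also have "\<dots> = multS (\<sigma> Y' (inv_of multS X)) (\<sigma> Y' b)" by (simp add: smul)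
  finally have R0: "\<sigma> (multT Y' u') (rho addS multS (\<sigma> u b) a) = multS (\<sigma> Y' (inv_of multS X)) (\<sigma> Y' b)" .
  have R: "rho ?A ?M (b, v) (a, u) = (\<sigma> (multT Y' u') (rho addS multS (\<sigma> u b) a), multT Y' v)"
  proof -
    have "rho ?A ?M (b, v) (a, u) = ?M (inv_of ?M (X, Y)) (b, v)" unfolding rho_def sum ..
    also have "\<dots> = (multS (\<sigma> Y' (inv_of multS X)) (\<sigma> Y' b), multT Y' v)"
      unfolding binv Y'_def by (simp add: asym_mult_def smul)
    finally show ?thesis unfolding R0 .
  qed
  show "?thesis a u b v"
    unfolding Let_def r_map_def L R Y_def[symmetric] u'_def[symmetric] a'_def[symmetric] Y'_def ..
qed

end
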